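(* Consider random variables $(Y,D,M,X,Z_1,Z_2)$ with supports $\mathcal{Y},\mathcal{D},\mathcal{M},\mathcal{X},\mathcal{Z}_1,\mathcal{Z}_2$, generated by a causal model as described in the context, and assume: (A1) $M(y)=M$, $D(m,y,z_2)=D$, $X(d,m,y,z_2)=X$, $Z_1(d,m,y,z_2)=Z_1$ and $Z_2(m,y)=Z_2$ for all $d\in\mathcal{D}$, $m\in\mathcal{M}$, $z_2\in\mathcal{Z}_2$, $y\in\mathcal{Y}$; and the model is faithful: only variables which are d-separated in the causal graph are statistically (conditionally) independent. Consider the conditions (TIam) $Y\perp\!\!\!\perp Z_1\mid D=d,X=x,Z_2=z_2$ for all $d\in\mathcal{D},x\in\mathcal{X},z_2\in\mathcal{Z}_2$; (TIbm) $M\perp\!\!\!\perp Z_1\mid D=d,X=x,Z_2=z_2$ for all $d\in\mathcal{D},x\in\mathcal{X},z_2\in\mathcal{Z}_2$; (TIc) $Y\perp\!\!\!\perp Z_2\mid D=d,M=m,X=x$ for all $d\in\mathcal{D},m\in\mathcal{M},x\in\mathcal{X}$; (TId) $Y\perp\!\!\!\perp Z_1\mid D=d,M=m,X=x$ for all $d\in\mathcal{D},m\in\mathcal{M},x\in\mathcal{X}$. Then (TIam), (TIbm), (TIc) together imply (TId); and (TIbm), (TIc), (TId) together imply (TIam).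
   Context: $D$ is a treatment, $M$ a mediator, $Y$ an outcome, $X$ observed pre-treatment covariates, $Z_1$ a (suspected) instrument for $D$, $Z_2$ a (suspected) instrument for $M$. The variables (together with possibly unobserved variables) are generated by a recursive nonparametric structural equation model whose causal graph is a directed acyclic graph containing the observed and unobserved variables; the joint distribution satisfies the causal Markov property with respect to this graph (d-separation implies conditional independence). For variables $A,B,\dots$, $A(b,\dots)$ denotes the potential value of $A$ when $B,\dots$ are set by intervention to $b,\dots$; $A(b)=A$ means intervening on $B$ does not change $A$. $\perp\!\!\!\perp$ denotes conditional statistical independence. d-separation: a path between $A$ and $B$ is blocked by a conditioning set $C$ if it contains a chain or fork whose middle node is in $C$, or a collider such that neither it nor any of its descendants is in $C$; $A$ and $B$ are d-separated given $C$ if every path between them is blocked. *)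

theory Defs
  imports Main
begin

text \<open>Causal DAG over a finite node type; E is the set of directed edges (u,v) meaning u -> v.\<close>

definition adj :: "('v \<times> 'v) set \<Rightarrow> 'v \<Rightarrow> 'v \<Rightarrow> bool" where
  "adj E u v \<longleftrightarrow> (u, v) \<in> E \<or> (v, u) \<in> E"

definition is_path :: "('v \<times> 'v) set \<Rightarrow> 'v list \<Rightarrow> bool" where
  "is_path E p \<longleftrightarrow> 2 \<le> length p \<and> distinct p \<and>
     (\<forall>i. Suc i < length p \<longrightarrow> adj E (p ! i) (p ! Suc i))"

definition collider :: "('v \<times> 'v) set \<Rightarrow> 'v list \<Rightarrow> nat \<Rightarrow> bool" where
  "collider E p i \<longleftrightarrow> (p ! (i - 1), p ! i) \<in> E \<and> (p ! Suc i, p ! i) \<in> E"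

definition blocked :: "('v \<times> 'v) set \<Rightarrow> 'v set \<Rightarrow> 'v list \<Rightarrow> bool" where
  "blocked E C p \<longleftrightarrow> (\<exists>i. 0 < i \<and> Suc i < length p \<and>
     (if collider E p i then (\<forall>c\<in>C. (p ! i, c) \<notin> E\<^sup>*) else p ! i \<in> C))"

definition dsep :: "('v \<times> 'v) set \<Rightarrow> 'v set \<Rightarrow> 'v set \<Rightarrow> 'v set \<Rightarrow> bool" where
  "dsep E A B C \<longleftrightarrow> (\<forall>p. is_path E p \<and> hd p \<in> A \<and> last p \<in> B \<longrightarrow> blocked E C p)"

text \<open>Graphical reading of the potential-outcome restriction A(b,...) = A:
  intervening on the nodes in Bs does not affect a, i.e. no directed path from
  any node of Bs to a.\<close>
definition no_effect :: "('v \<times> 'v) set \<Rightarrow> 'v set \<Rightarrow> 'v \<Rightarrow> bool" where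
  "no_effect E Bs a \<longleftrightarrow> (\<forall>b\<in>Bs. (b, a) \<notin> E\<^sup>+)"

definition pw_disjoint3 :: "'v set \<Rightarrow> 'v set \<Rightarrow> 'v set \<Rightarrow> bool" where
  "pw_disjoint3 A B C \<longleftrightarrow> A \<inter> B = {} \<and> A \<inter> C = {} \<and> B \<inter> C = {}"

end

theory Submission
  imports Defs
begin


lemma rtrancl_walk:
  assumes "(u, v) \<in> E\<^sup>*"
  shows "\<exists>q. q \<noteq> [] \<and> hd q = u \<and> last q = v \<and> (\<forall>k. Suc k < length q \<longrightarrow> (q!k, q!Suc k) \<in> E)"
  using assms
proof (induction rule: converse_rtrancl_induct)
  case base
  then show ?case by (intro exI[of _ "[v]"]) auto
next
  case (step u u')
  then obtain q where q: "q \<noteq> []" "hd q = u'" "last q = v" "\<forall>k. Suc k < length q \<longrightarrow> (q!k, q!Suc k) \<in> E" by blast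
  show ?case
  proof (intro exI[of _ "u # q"] conjI allI impI)
    fix k assume k: "Suc k < length (u # q)"
    show "((u # q) ! k, (u # q) ! Suc k) \<in> E"
    proof (cases k)
      case 0 then show ?thesis using q step(1) by (simp add: hd_conv_nth)
    next
      case (Suc k') then show ?thesis using q k by auto
    qed
  qed (use q in auto)
qed

lemma walk_desc:
  assumes "\<forall>k. Suc k < length q \<longrightarrow> (q!k, q!Suc k) \<in> E" "k < length q"
  shows "(q!0, q!k) \<in> E\<^sup>*"
  using assms(2)
proof (induction k)
  case 0 then show ?case by simp
next
  case (Suc k)
  then have "(q!0, q!k) \<in> E\<^sup>*" by simp
  moreover have "(q!k, q!Suc k) \<in> E" using assms(1) Suc.prems by blast
  ultimately show ?case by (rule rtrancl_into_rtrancl)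
qed

lemma walk_trancl:
  assumes "\<forall>k. Suc k < length q \<longrightarrow> (q!k, q!Suc k) \<in> E" "i < j" "j < length q"
  shows "(q!i, q!j) \<in> E\<^sup>+"
  using assms(2,3)
proof (induction j)
  case 0 then show ?case by simp
next
  case (Suc j)
  have e: "(q!j, q!Suc j) \<in> E" using assms(1) Suc.prems by blast
  show ?case
  proof (cases "i = j")
    case True then show ?thesis using e by auto
  next
    case False
    then have "(q!i, q!j) \<in> E\<^sup>+" using Suc by simp
    then show ?thesis using e by (rule trancl_into_trancl)
  qed
qed

lemma walk_distinct:
  assumes "acyclic E" "\<forall>k. Suc k < length q \<longrightarrow> (q!k, q!Suc k) \<in> E"
  shows "distinct q"
  unfolding distinct_conv_nth
proof (intro allI impI)
  fix i j assume h: "i < length q" "j < length q" "i \<noteq> j"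
  show "q!i \<noteq> q!j"
  proof
    assume eq: "q!i = q!j"
    show False
    proof (cases "i < j")
      case True
      then have "(q!i, q!j) \<in> E\<^sup>+" using walk_trancl[OF assms(2)] h by blast
      then show False using assms(1) eq unfolding acyclic_def by metis
    next
      case False
      then have "(q!j, q!i) \<in> E\<^sup>+" using walk_trancl[OF assms(2)] h by simp
      then show False using assms(1) eq unfolding acyclic_def by metis
    qed
  qed
qed

lemma path_rev: "is_path E (rev p) \<longleftrightarrow> is_path E p"
proof -
  have "(\<forall>i. Suc i < length p \<longrightarrow> adj E (rev p ! i) (rev p ! Suc i)) \<longleftrightarrow>
        (\<forall>i. Suc i < length p \<longrightarrow> adj E (p ! i) (p ! Suc i))"
  proof
    assume H: "\<forall>i. Suc i < length p \<longrightarrow> adj E (rev p ! i) (rev p ! Suc i)"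
    show "\<forall>i. Suc i < length p \<longrightarrow> adj E (p ! i) (p ! Suc i)"
    proof (intro allI impI)
      fix i assume i: "Suc i < length p"
      have "adj E (rev p ! (length p - Suc (Suc i))) (rev p ! Suc (length p - Suc (Suc i)))"
        using H i by auto
      moreover have "Suc (length p - Suc (Suc i)) = length p - Suc i" using i by simp
      ultimately show "adj E (p ! i) (p ! Suc i)" using i
        by (auto simp: rev_nth adj_def Suc_diff_Suc)
    qed
  next
    assume H: "\<forall>i. Suc i < length p \<longrightarrow> adj E (p ! i) (p ! Suc i)"
    show "\<forall>i. Suc i < length p \<longrightarrow> adj E (rev p ! i) (rev p ! Suc i)"
    proof (intro allI impI)
      fix i assume i: "Suc i < length p"
      have "adj E (p ! (length p - Suc (Suc i))) (p ! Suc (length p - Suc (Suc i)))"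
        using H i by auto
      moreover have "Suc (length p - Suc (Suc i)) = length p - Suc i" using i by simp
      ultimately show "adj E (rev p ! i) (rev p ! Suc i)" using i
        by (auto simp: rev_nth adj_def Suc_diff_Suc)
    qed
  qed
  then show ?thesis unfolding is_path_def by simp
qed

lemma blocked_rev_aux:
  assumes "blocked E C p" shows "blocked E C (rev p)"
proof -
  obtain i where i: "0 < i" "Suc i < length p"
    "if collider E p i then (\<forall>c\<in>C. (p ! i, c) \<notin> E\<^sup>*) else p ! i \<in> C"
    using assms unfolding blocked_def by blast
  define j where "j = length p - Suc i"
  have j: "0 < j" "Suc j < length p" using i unfolding j_def by auto
  have e1: "rev p ! j = p ! i" using i unfolding j_def by (simp add: rev_nth)
  have e2: "rev p ! (j - 1) = p ! Suc i" using i unfolding j_def by (simp add: rev_nth Suc_diff_Suc)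
  have ij: "length p - Suc (Suc j) = i - 1" using i unfolding j_def by linarith
  have e3: "rev p ! Suc j = p ! (i - 1)" using j ij by (simp add: rev_nth)
  have "collider E (rev p) j \<longleftrightarrow> collider E p i"
    unfolding collider_def using e1 e2 e3 by auto
  then show ?thesis unfolding blocked_def using j i e1 by (intro exI[of _ j]) auto
qed

lemma blocked_rev: "blocked E C (rev p) \<longleftrightarrow> blocked E C p"
  using blocked_rev_aux[of E C p] blocked_rev_aux[of E C "rev p"] by auto


lemma path_drop:
  assumes "is_path E p" "Suc j < length p"
  shows "is_path E (drop j p)"
  using assms unfolding is_path_def by (auto simp: distinct_drop)

lemma unblocked_drop:
  assumes "\<not> blocked E C p" "Suc j < length p"
  shows "\<not> blocked E C (drop j p)"
proof
  assume "blocked E C (drop j p)"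
  then obtain i where i: "0 < i" "Suc i < length (drop j p)"
    "if collider E (drop j p) i then (\<forall>c\<in>C. (drop j p ! i, c) \<notin> E\<^sup>*) else drop j p ! i \<in> C"
    unfolding blocked_def by blast
  have "collider E (drop j p) i \<longleftrightarrow> collider E p (j + i)"
    unfolding collider_def using i by (auto simp: nth_drop)
  then have "blocked E C p" unfolding blocked_def using i
    by (intro exI[of _ "j + i"]) (auto simp: nth_drop split: if_splits)
  then show False using assms by simp
qed

lemma path_take:
  assumes "is_path E p" "0 < j" "j < length p"
  shows "is_path E (take (Suc j) p)"
  using assms unfolding is_path_def by (auto simp: distinct_take)

lemma unblocked_take:
  assumes "\<not> blocked E C p"
  shows "\<not> blocked E C (take k p)"
proof
  assume "blocked E C (take k p)"
  then obtain i where i: "0 < i" "Suc i < length (take k p)"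
    "if collider E (take k p) i then (\<forall>c\<in>C. (take k p ! i, c) \<notin> E\<^sup>*) else take k p ! i \<in> C"
    unfolding blocked_def by blast
  have "collider E (take k p) i \<longleftrightarrow> collider E p i"
    unfolding collider_def using i by auto
  then have "blocked E C p" unfolding blocked_def using i
    by (intro exI[of _ i]) (auto split: if_splits)
  then show False using assms by simp
qed


lemma key:
  assumes ac: "acyclic E" and pp: "is_path E p" and ubS: "\<not> blocked E S p"
    and bT: "blocked E T p" and sub: "set p \<inter> T \<subseteq> S" and hdS: "hd p \<notin> S"
  shows "\<exists>r t. is_path E r \<and> hd r = hd p \<and> last r = t \<and> t \<in> S \<and> t \<notin> T \<and> \<not> blocked E T r"
proof -
  define P where "P i \<longleftrightarrow> 0 < i \<and> Suc i < length p \<and>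
     (if collider E p i then (\<forall>c\<in>T. (p ! i, c) \<notin> E\<^sup>*) else p ! i \<in> T)" for i
  have exP: "\<exists>i. P i" using bT unfolding blocked_def P_def by blast
  define i0 where "i0 = (LEAST i. P i)"
  have Pi0: "P i0" unfolding i0_def using exP by (metis LeastI_ex)
  have minP: "\<not> P i" if "i < i0" for i using that unfolding i0_def by (rule not_less_Least)
  have nc_notT: "p ! i \<notin> T" if "0 < i" "Suc i < length p" "\<not> collider E p i" for i
  proof -
    have "p ! i \<notin> S" using ubS that unfolding blocked_def by auto
    moreover have "p ! i \<in> set p" using that by simp
    ultimately show ?thesis using sub by blast
  qed
  have i0: "0 < i0" "Suc i0 < length p" using Pi0 unfolding P_def by auto
  have col0: "collider E p i0" using Pi0 nc_notT[OF i0] unfolding P_def by auto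
  define c where "c = p ! i0"
  have nodesc: "\<forall>t\<in>T. (c, t) \<notin> E\<^sup>*" using Pi0 col0 unfolding P_def c_def by auto
  obtain s where s: "s \<in> S" "(c, s) \<in> E\<^sup>*"
    using ubS i0 col0 unfolding blocked_def c_def by fastforce
  have sT: "s \<notin> T" using s nodesc by blast
  obtain q where q: "q \<noteq> []" "hd q = c" "last q = s"
    and qw: "\<forall>k. Suc k < length q \<longrightarrow> (q!k, q!Suc k) \<in> E"
    using rtrancl_walk[OF s(2)] by blast
  have qd: "distinct q" by (rule walk_distinct[OF ac qw])
  have q0: "q ! 0 = c" using q by (simp add: hd_conv_nth)
  have qdesc: "(c, q ! k) \<in> E\<^sup>*" if "k < length q" for k
    using walk_desc[OF qw that] q0 by simp
  have qnotT: "q ! k \<notin> T" if "k < length q" for k using qdesc[OF that] nodesc by blast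
  define Q where "Q j \<longleftrightarrow> j \<le> i0 \<and> p ! j \<in> set q" for j
  have Qi0: "Q i0" unfolding Q_def c_def[symmetric] using q by auto
  define j0 where "j0 = (LEAST j. Q j)"
  have Qj0: "Q j0" unfolding j0_def using Qi0 by (metis LeastI_ex)
  have minQ: "\<not> Q j" if "j < j0" for j using that unfolding j0_def by (rule not_less_Least)
  have j0le: "j0 \<le> i0" using Qj0 unfolding Q_def by simp
  have notq: "p ! j \<notin> set q" if "j < j0" for j using minQ[OF that] that j0le unfolding Q_def by simp
  obtain k0 where k0: "k0 < length q" "q ! k0 = p ! j0" using Qj0 unfolding Q_def by (metis in_set_conv_nth)
  define r where "r = take j0 p @ drop k0 q"
  have lenr: "length r = j0 + (length q - k0)" unfolding r_def using j0le i0 by simp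
  have rp: "r ! i = p ! i" if "i \<le> j0" for i
  proof (cases "i < j0")
    case True then show ?thesis unfolding r_def using j0le i0 by (simp add: nth_append)
  next
    case False then have "i = j0" using that by simp
    then show ?thesis unfolding r_def using j0le i0 k0 by (simp add: nth_append)
  qed
  have rq: "r ! i = q ! (k0 + (i - j0))" if "j0 \<le> i" "i < length r" for i
    unfolding r_def using that j0le i0 k0 lenr by (simp add: nth_append)
  have len2: "2 \<le> length r"
  proof (cases "j0 = 0")
    case True
    have "k0 \<noteq> length q - 1"
    proof
      assume "k0 = length q - 1"
      then have "q ! k0 = s" using q by (simp add: last_conv_nth)
      moreover have "q ! k0 = hd p" using k0 True pp unfolding is_path_def by (subst hd_conv_nth) auto
      ultimately show False using s hdS by simp
    qed
    then show ?thesis using lenr True k0 by simp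
  next
    case False then show ?thesis using lenr k0 by simp
  qed
  have dr: "distinct r"
  proof -
    have "distinct (take j0 p)" using pp unfolding is_path_def by simp
    moreover have "distinct (drop k0 q)" using qd by simp
    moreover have "set (take j0 p) \<inter> set (drop k0 q) = {}"
    proof -
      have "x \<notin> set q" if "x \<in> set (take j0 p)" for x
      proof -
        from that obtain j where "j < length (take j0 p)" "take j0 p ! j = x" by (metis in_set_conv_nth)
        then show ?thesis using notq by auto
      qed
      moreover have "set (drop k0 q) \<subseteq> set q" by (rule set_drop_subset)
      ultimately show ?thesis by blast
    qed
    ultimately show ?thesis unfolding r_def by simp
  qed
  have adjr: "adj E (r ! i) (r ! Suc i)" if "Suc i < length r" for i
  proof (cases "Suc i \<le> j0")
    case True
    then show ?thesis using rp[of i] rp[of "Suc i"] pp j0le i0 unfolding is_path_def by auto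
  next
    case False
    then have "r ! i = q ! (k0 + (i - j0))" "r ! Suc i = q ! Suc (k0 + (i - j0))"
      using rq[of i] rq[of "Suc i"] that by (auto simp: Suc_diff_le)
    moreover have "Suc (k0 + (i - j0)) < length q" using False that lenr by simp
    ultimately show ?thesis using qw unfolding adj_def by auto
  qed
  have pathr: "is_path E r" unfolding is_path_def using len2 dr adjr by blast
  have hdr: "hd r = hd p"
  proof -
    have "r \<noteq> []" "p \<noteq> []" using len2 pp unfolding is_path_def by auto
    then show ?thesis using rp[of 0] by (simp add: hd_conv_nth)
  qed
  have lastr: "last r = s" unfolding r_def using k0 q by (simp add: last_drop)
  have ubr: "\<not> blocked E T r"
  proof
    assume "blocked E T r"
    then obtain i where i: "0 < i" "Suc i < length r"
      "if collider E r i then (\<forall>c\<in>T. (r ! i, c) \<notin> E\<^sup>*) else r ! i \<in> T"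
      unfolding blocked_def by blast
    show False
    proof (cases "i < j0")
      case True
      have "r ! (i - 1) = p ! (i - 1)" "r ! i = p ! i" "r ! Suc i = p ! Suc i"
        using rp True by auto
      then have cc: "collider E r i \<longleftrightarrow> collider E p i" unfolding collider_def by simp
      have ip: "Suc i < length p" using True j0le i0 by simp
      show False
      proof (cases "collider E p i")
        case True
        then show False using minP[of i] \<open>i < j0\<close> j0le i i(3) cc ip \<open>r ! i = p ! i\<close>
          unfolding P_def by auto
      next
        case False
        then show False using nc_notT[OF i(1) ip] i(3) cc \<open>r ! i = p ! i\<close> by auto
      qed
    next
      case False
      then have e: "r ! i = q ! (k0 + (i - j0))" "r ! Suc i = q ! Suc (k0 + (i - j0))"
        using rq[of i] rq[of "Suc i"] i by (auto simp: Suc_diff_le)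
      have kk: "Suc (k0 + (i - j0)) < length q" using False i lenr by simp
      have ed: "(r ! i, r ! Suc i) \<in> E" using e qw kk by auto
      have "\<not> collider E r i"
      proof
        assume "collider E r i"
        then have "(r ! Suc i, r ! i) \<in> E" unfolding collider_def by simp
        with ed have "(r ! i, r ! i) \<in> E\<^sup>+" by auto
        then show False using ac unfolding acyclic_def by blast
      qed
      then have "r ! i \<in> T" using i(3) by simp
      then show False using e qnotT kk by auto
    qed
  qed
  show ?thesis using pathr hdr lastr s sT ubr by blast
qed


lemma part1:
  assumes ac: "acyclic E" and dist: "distinct [y, d, m, x, z1, z2]"
    and h1: "dsep E {y} {z1} {d, x, z2}" and h2: "dsep E {m} {z1} {d, x, z2}"
    and h3: "dsep E {y} {z2} {d, m, x}"
  shows "dsep E {y} {z1} {d, m, x}"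
  unfolding dsep_def
proof (intro allI impI, rule ccontr)
  fix p assume pa: "is_path E p \<and> hd p \<in> {y} \<and> last p \<in> {z1}" and ub: "\<not> blocked E {d, m, x} p"
  have pp: "is_path E p" and hp: "hd p = y" and lp: "last p = z1" using pa by auto
  have ne: "p \<noteq> []" using pp unfolding is_path_def by auto
  show False
  proof (cases "z2 \<in> set p")
    case True
    then obtain j where j: "j < length p" "p ! j = z2" by (metis in_set_conv_nth)
    have j0: "0 < j" using j hp dist ne by (cases j) (auto simp: hd_conv_nth)
    have "is_path E (take (Suc j) p)" using path_take[OF pp j0 j(1)] .
    moreover have "hd (take (Suc j) p) = y" using hp ne by (simp add: hd_conv_nth)
    moreover have "last (take (Suc j) p) = z2" using j by (subst last_conv_nth) auto
    moreover have "\<not> blocked E {d, m, x} (take (Suc j) p)" using unblocked_take[OF ub] .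
    ultimately show False using h3 unfolding dsep_def by auto
  next
    case False
    have sub: "set p \<inter> {d, x, z2} \<subseteq> {d, m, x}" using False by auto
    show False
    proof (cases "blocked E {d, x, z2} p")
      case False
      then show False using h1 pp hp lp unfolding dsep_def by auto
    next
      case True
      have k1: "is_path E (rev p)" using pp path_rev by blast
      have k2: "\<not> blocked E {d, m, x} (rev p)" using ub blocked_rev by blast
      have k3: "blocked E {d, x, z2} (rev p)" using True blocked_rev by blast
      have k4: "set (rev p) \<inter> {d, x, z2} \<subseteq> {d, m, x}" using sub by simp
      have k5: "hd (rev p) \<notin> {d, m, x}" using lp ne dist by (auto simp: hd_rev)
      obtain r t where r: "is_path E r" "hd r = hd (rev p)" "last r = t"
        "t \<in> {d, m, x}" "t \<notin> {d, x, z2}" "\<not> blocked E {d, x, z2} r"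
        using key[OF ac k1 k2 k3 k4 k5] by blast
      have tm: "t = m" using r(4,5) by auto
      have rne: "r \<noteq> []" using r(1) unfolding is_path_def by auto
      have "is_path E (rev r)" using r(1) path_rev by blast
      moreover have "hd (rev r) = m" using r(3) tm rne by (simp add: hd_rev)
      moreover have "last (rev r) = z1" using r(2) rne ne lp by (simp add: last_rev hd_rev)
      moreover have "\<not> blocked E {d, x, z2} (rev r)" using r(6) blocked_rev by blast
      ultimately show False using h2 unfolding dsep_def by auto
    qed
  qed
qed

lemma part2:
  assumes ac: "acyclic E" and dist: "distinct [y, d, m, x, z1, z2]"
    and h1: "dsep E {m} {z1} {d, x, z2}" and h2: "dsep E {y} {z2} {d, m, x}"
    and h3: "dsep E {y} {z1} {d, m, x}"
  shows "dsep E {y} {z1} {d, x, z2}"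
  unfolding dsep_def
proof (intro allI impI, rule ccontr)
  fix p assume pa: "is_path E p \<and> hd p \<in> {y} \<and> last p \<in> {z1}" and ub: "\<not> blocked E {d, x, z2} p"
  have pp: "is_path E p" and hp: "hd p = y" and lp: "last p = z1" using pa by auto
  have ne: "p \<noteq> []" using pp unfolding is_path_def by auto
  show False
  proof (cases "m \<in> set p")
    case True
    then obtain j where j: "j < length p" "p ! j = m" by (metis in_set_conv_nth)
    have j1: "Suc j < length p"
    proof (rule ccontr)
      assume "\<not> Suc j < length p"
      then have "j = length p - 1" using j by simp
      then have "m = z1" using j lp ne by (simp add: last_conv_nth)
      then show False using dist by simp
    qed
    have "is_path E (drop j p)" using path_drop[OF pp j1] .
    moreover have "hd (drop j p) = m" using j by (simp add: hd_drop_conv_nth)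
    moreover have "last (drop j p) = z1" using j lp by (simp add: last_drop)
    moreover have "\<not> blocked E {d, x, z2} (drop j p)" using unblocked_drop[OF ub j1] .
    ultimately show False using h1 unfolding dsep_def by auto
  next
    case False
    have sub: "set p \<inter> {d, m, x} \<subseteq> {d, x, z2}" using False by auto
    show False
    proof (cases "blocked E {d, m, x} p")
      case False
      then show False using h3 pp hp lp unfolding dsep_def by auto
    next
      case True
      have "hd p \<notin> {d, x, z2}" using hp dist by simp
      then obtain r t where r: "is_path E r" "hd r = hd p" "last r = t"
        "t \<in> {d, x, z2}" "t \<notin> {d, m, x}" "\<not> blocked E {d, m, x} r"
        using key[OF ac pp ub True sub] by blast
      have "t = z2" using r(4,5) by auto
      then show False using h2 r hp unfolding dsep_def by auto
    qed
  qed
qed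



theorem lemma1:
  fixes E :: "('v::finite \<times> 'v) set"
    and indep :: "'v set \<Rightarrow> 'v set \<Rightarrow> 'v set \<Rightarrow> bool"
    and y d m x z1 z2 :: 'v
  assumes dag: "acyclic E"
    and obs: "distinct [y, d, m, x, z1, z2]"
    and markov: "\<forall>A B C. pw_disjoint3 A B C \<longrightarrow> dsep E A B C \<longrightarrow> indep A B C"
    and faithful: "\<forall>A B C. pw_disjoint3 A B C \<longrightarrow> indep A B C \<longrightarrow> dsep E A B C"
    and A1_M: "no_effect E {y} m"
    and A1_D: "no_effect E {m, y, z2} d"
    and A1_X: "no_effect E {d, m, y, z2} x"
    and A1_Z1: "no_effect E {d, m, y, z2} z1"
    and A1_Z2: "no_effect E {m, y} z2"
  shows "(indep {y} {z1} {d, x, z2} \<and> indep {m} {z1} {d, x, z2} \<and> indep {y} {z2} {d, m, x}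
            \<longrightarrow> indep {y} {z1} {d, m, x})
       \<and> (indep {m} {z1} {d, x, z2} \<and> indep {y} {z2} {d, m, x} \<and> indep {y} {z1} {d, m, x}
            \<longrightarrow> indep {y} {z1} {d, x, z2})"
proof -
  have eqv: "indep A B C \<longleftrightarrow> dsep E A B C" if "pw_disjoint3 A B C" for A B C
    using markov faithful that by blast
  have e1: "indep {y} {z1} {d, x, z2} \<longleftrightarrow> dsep E {y} {z1} {d, x, z2}"
    using obs by (intro eqv) (auto simp: pw_disjoint3_def)
  have e2: "indep {m} {z1} {d, x, z2} \<longleftrightarrow> dsep E {m} {z1} {d, x, z2}"
    using obs by (intro eqv) (auto simp: pw_disjoint3_def)
  have e3: "indep {y} {z2} {d, m, x} \<longleftrightarrow> dsep E {y} {z2} {d, m, x}"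
    using obs by (intro eqv) (auto simp: pw_disjoint3_def)
  have e4: "indep {y} {z1} {d, m, x} \<longleftrightarrow> dsep E {y} {z1} {d, m, x}"
    using obs by (intro eqv) (auto simp: pw_disjoint3_def)
  have p1: "dsep E {y} {z1} {d, x, z2} \<and> dsep E {m} {z1} {d, x, z2} \<and> dsep E {y} {z2} {d, m, x}
            \<longrightarrow> dsep E {y} {z1} {d, m, x}"
    using part1[OF dag obs] by (intro impI) (elim conjE)
  have p2: "dsep E {m} {z1} {d, x, z2} \<and> dsep E {y} {z2} {d, m, x} \<and> dsep E {y} {z1} {d, m, x}
            \<longrightarrow> dsep E {y} {z1} {d, x, z2}"
    using part2[OF dag obs] by (intro impI) (elim conjE)
  show ?thesis unfolding e1 e2 e3 e4 using p1 p2 by (rule conjI)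
qed

end
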